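(* Let $\mathbb{K}=(K,+,\times,0,1)$ be a semiring, let $A=(\Sigma,Q,\nu,\delta)$ be a RWTA with weights in $K$, and let $\sim$ be an equivalence relation on $Q$ that is down compatible with $A$. Then $\mathbb{P}_A=\mathbb{P}_{A_\sim}$.
   Context: A graded alphabet is a finite set $\Sigma=\bigcup_{k\in\mathbb{N}}\Sigma_k$; $T_\Sigma$ is the set of trees $f(t_1,\ldots,t_k)$ with $f\in\Sigma_k$. A RWTA with weights in $K$ is $A=(\Sigma,Q,\nu,\delta)$ with $Q$ finite, $\nu:Q\to K$, $\delta\subseteq\bigcup_k Q\times\Sigma_k\times Q^k$. Write $\delta(f,q_1,\ldots,q_k)=\{q\mid(q,f,q_1,\ldots,q_k)\in\delta\}$, extended to subsets by union over tuples; $\nu(S)=\sum_{s\in S}\nu(s)$ ($\nu(\emptyset)=0$); $\Delta(f(t_1,\ldots,t_k))=\delta(f,\Delta(t_1),\ldots,\Delta(t_k))$; $\mathbb{P}_A(t)=\nu(\Delta(t))$. The down language of $q$ is $L_q(A)=\{t\in T_\Sigma\mid q\in\Delta(t)\}$. An equivalence relation $\sim$ on $Q$ is down compatible with $A$ if $q_1\sim q_2$ implies $L_{q_1}(A)=L_{q_2}(A)$. The quotient of $A$ by an equivalence relation $\sim$ on $Q$ is the RWTA $A_\sim=(\Sigma,Q_\sim,\nu',\delta')$, where $Q_\sim$ is the set of equivalence classes, $\nu'(C)=\sum_{q\in C}\nu(q)$, and for classes $C_1,\ldots,C_{k+1}$ and $f\in\Sigma_k$, $C_{k+1}\in\delta'(f,C_1,\ldots,C_k)$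 iff there exist $q_i\in C_i$ ($1\le i\le k+1$) with $q_{k+1}\in\delta(f,q_1,\ldots,q_k)$. *)

theory Defs
  imports Main
begin

(* Ranked trees over symbols of type 'f.  A graded alphabet is a finite set
   Sig of symbols together with a rank function; T_Sigma = wf_trees. *)
datatype 'f tree = Node 'f "'f tree list"

fun wf_tree :: "'f set \<Rightarrow> ('f \<Rightarrow> nat) \<Rightarrow> 'f tree \<Rightarrow> bool" where
  "wf_tree Sig rank (Node f ts) =
     (f \<in> Sig \<and> length ts = rank f \<and> (\<forall>t\<in>set ts. wf_tree Sig rank t))"

definition trees :: "'f set \<Rightarrow> ('f \<Rightarrow> nat) \<Rightarrow> 'f tree set" where
  "trees Sig rank = {t. wf_tree Sig rank t}"

definition rwta :: "'f set \<Rightarrow> ('f \<Rightarrow> nat) \<Rightarrow> 'q set \<Rightarrow> ('q \<times> 'f \<times> 'q list) set \<Rightarrow> bool" where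
  "rwta Sig rank Q delta \<longleftrightarrow> finite Sig \<and> finite Q \<and>
     (\<forall>(q, f, qs) \<in> delta. q \<in> Q \<and> f \<in> Sig \<and> length qs = rank f \<and> set qs \<subseteq> Q)"

fun Delta :: "('q \<times> 'f \<times> 'q list) set \<Rightarrow> 'f tree \<Rightarrow> 'q set" where
  "Delta delta (Node f ts) =
     {q. \<exists>qs. list_all2 (\<lambda>q S. q \<in> S) qs (map (Delta delta) ts) \<and> (q, f, qs) \<in> delta}"

definition PA :: "('q \<Rightarrow> 'k::semiring_1) \<Rightarrow> ('q \<times> 'f \<times> 'q list) set \<Rightarrow> 'f tree \<Rightarrow> 'k" where
  "PA nu delta t = sum nu (Delta delta t)"

definition down_lang :: "'f set \<Rightarrow> ('f \<Rightarrow> nat) \<Rightarrow> ('q \<times> 'f \<times> 'q list) set \<Rightarrow> 'q \<Rightarrow> 'f tree set" where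
  "down_lang Sig rank delta q = {t \<in> trees Sig rank. q \<in> Delta delta t}"

definition down_compatible ::
  "'f set \<Rightarrow> ('f \<Rightarrow> nat) \<Rightarrow> ('q \<times> 'f \<times> 'q list) set \<Rightarrow> ('q \<times> 'q) set \<Rightarrow> bool" where
  "down_compatible Sig rank delta R \<longleftrightarrow>
     (\<forall>(q1, q2) \<in> R. down_lang Sig rank delta q1 = down_lang Sig rank delta q2)"

definition quot_nu :: "('q \<Rightarrow> 'k::semiring_1) \<Rightarrow> 'q set \<Rightarrow> 'k" where
  "quot_nu nu C = sum nu C"

definition quot_delta ::
  "'q set \<Rightarrow> ('q \<times> 'q) set \<Rightarrow> ('q \<times> 'f \<times> 'q list) set \<Rightarrow> ('q set \<times> 'f \<times> 'q set list) set" where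
  "quot_delta Q R delta =
     {(C, f, Cs). C \<in> Q // R \<and> set Cs \<subseteq> Q // R \<and>
        (\<exists>q qs. q \<in> C \<and> list_all2 (\<lambda>q C. q \<in> C) qs Cs \<and> (q, f, qs) \<in> delta)}"

end

theory Submission
  imports Defs
begin

lemma closure_lemma:
  assumes "down_compatible Sig rank delta R" "wf_tree Sig rank t" "q \<in> Delta delta t" "(q, q') \<in> R"
  shows "q' \<in> Delta delta t"
proof -
  have "down_lang Sig rank delta q = down_lang Sig rank delta q'"
    using assms(1,4) unfolding down_compatible_def by auto
  moreover have "t \<in> down_lang Sig rank delta q" using assms(2,3)
    unfolding down_lang_def trees_def by auto
  ultimately show ?thesis unfolding down_lang_def by auto
qed

lemma Delta_sub:
  assumes "rwta Sig rank Q delta"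
  shows "Delta delta t \<subseteq> Q"
  using assms by (cases t) (auto simp: rwta_def)

lemma quot_Delta:
  assumes rw: "rwta Sig rank Q delta" and eq: "equiv Q R"
    and dc: "down_compatible Sig rank delta R"
  shows "wf_tree Sig rank t \<Longrightarrow>
     Delta (quot_delta Q R delta) t = (\<lambda>q. R``{q}) ` Delta delta t"
proof (induction t)
  case (Node f ts)
  have wf: "\<forall>t\<in>set ts. wf_tree Sig rank t" using Node.prems by simp
  have IH: "\<And>i. i < length ts \<Longrightarrow> Delta (quot_delta Q R delta) (ts!i) = (\<lambda>q. R``{q}) ` Delta delta (ts!i)"
    using Node.IH wf by (meson nth_mem)
  have wfi: "\<And>i. i < length ts \<Longrightarrow> wf_tree Sig rank (ts!i)" using wf by simp
  show ?case
  proof (rule set_eqI, rule iffI)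
    fix C assume "C \<in> Delta (quot_delta Q R delta) (Node f ts)"
    then obtain Cs where l: "list_all2 (\<lambda>q S. q \<in> S) Cs (map (Delta (quot_delta Q R delta)) ts)"
      and tr: "(C, f, Cs) \<in> quot_delta Q R delta" by auto
    from tr obtain q qs where C: "C \<in> Q // R" and q: "q \<in> C" and l2: "list_all2 (\<lambda>q C. q \<in> C) qs Cs"
      and d: "(q, f, qs) \<in> delta" unfolding quot_delta_def by auto
    have len: "length Cs = length ts" "length qs = length Cs"
      using l l2 by (auto simp: list_all2_conv_all_nth)
    have "\<forall>i < length qs. qs!i \<in> Delta delta (ts!i)"
    proof (intro allI impI)
      fix i assume i: "i < length qs"
      have "Cs!i \<in> (\<lambda>q. R``{q}) ` Delta delta (ts!i)"
        using l IH[of i] i len by (auto simp: list_all2_conv_all_nth)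
      then obtain p where p: "p \<in> Delta delta (ts!i)" "Cs!i = R``{p}" by auto
      have "qs!i \<in> Cs!i" using l2 i by (auto simp: list_all2_conv_all_nth)
      then have "(p, qs!i) \<in> R" using p by auto
      then show "qs!i \<in> Delta delta (ts!i)"
        using closure_lemma[OF dc wfi p(1)] i len by auto
    qed
    then have qD: "q \<in> Delta delta (Node f ts)"
      using d len by (auto simp: list_all2_conv_all_nth)
    have "C = R``{q}" using C q eq
      by (metis Image_singleton_iff equiv_class_eq_iff quotientE)
    then show "C \<in> (\<lambda>q. R``{q}) ` Delta delta (Node f ts)" using qD by auto
  next
    fix C assume "C \<in> (\<lambda>q. R``{q}) ` Delta delta (Node f ts)"
    then obtain q where C: "C = R``{q}" and qD: "q \<in> Delta delta (Node f ts)" by auto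
    then obtain qs where l: "list_all2 (\<lambda>q S. q \<in> S) qs (map (Delta delta) ts)"
      and d: "(q, f, qs) \<in> delta" by auto
    have len: "length qs = length ts" using l by (auto simp: list_all2_conv_all_nth)
    have qsQ: "set qs \<subseteq> Q" "q \<in> Q" using d rw unfolding rwta_def by auto
    define Cs where "Cs = map (\<lambda>q. R``{q}) qs"
    have refl: "\<And>x. x \<in> Q \<Longrightarrow> x \<in> R``{x}" using eq by (auto simp: equiv_def refl_on_def)
    have a1: "C \<in> Q // R" using C qsQ by (auto simp: quotient_def)
    have a2: "set Cs \<subseteq> Q // R" using qsQ by (auto simp: Cs_def quotient_def)
    have a3: "list_all2 (\<lambda>q C. q \<in> C) qs Cs"
      unfolding Cs_def list_all2_conv_all_nth
    proof (intro conjI allI impI)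
      fix i assume "i < length qs"
      then have "qs!i \<in> Q" using qsQ(1) nth_mem by blast
      then show "qs!i \<in> map (\<lambda>q. R``{q}) qs ! i" using refl \<open>i < length qs\<close> by simp
    qed simp
    have a4: "q \<in> C" using C qsQ refl by auto
    have "(C, f, Cs) \<in> quot_delta Q R delta"
      unfolding quot_delta_def using a1 a2 a3 a4 d by blast
    moreover have "list_all2 (\<lambda>q S. q \<in> S) Cs (map (Delta (quot_delta Q R delta)) ts)"
      using l IH len by (auto simp: Cs_def list_all2_conv_all_nth)
    ultimately show "C \<in> Delta (quot_delta Q R delta) (Node f ts)" by auto
  qed
qed

theorem proposition6:
  fixes Sig :: "'f set" and rank :: "'f \<Rightarrow> nat" and Q :: "'q set"
    and nu :: "'q \<Rightarrow> 'k::semiring_1" and delta :: "('q \<times> 'f \<times> 'q list) set"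
    and R :: "('q \<times> 'q) set"
  assumes "rwta Sig rank Q delta"
    and "equiv Q R"
    and "down_compatible Sig rank delta R"
  shows "\<forall>t \<in> trees Sig rank. PA nu delta t = PA (quot_nu nu) (quot_delta Q R delta) t"
proof
  fix t assume "t \<in> trees Sig rank"
  then have wf: "wf_tree Sig rank t" by (simp add: trees_def)
  let ?D = "Delta delta t"
  have sub: "?D \<subseteq> Q" using Delta_sub[OF assms(1)] .
  have fQ: "finite Q" using assms(1) by (simp add: rwta_def)
  have RQ: "R \<subseteq> Q \<times> Q" using assms(2) by (simp add: equiv_def refl_on_def)
  have cls: "\<And>q. q \<in> ?D \<Longrightarrow> R``{q} \<subseteq> ?D"
    using closure_lemma[OF assms(3) wf] by auto
  have fin: "\<And>q. finite (R``{q})" using RQ fQ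
  proof -
    fix q have "R``{q} \<subseteq> Q" using RQ by auto
    then show "finite (R``{q})" using fQ finite_subset by blast
  qed
  have un: "\<Union> ((\<lambda>q. R``{q}) ` ?D) = ?D"
  proof
    show "\<Union> ((\<lambda>q. R``{q}) ` ?D) \<subseteq> ?D" using cls by auto
    show "?D \<subseteq> \<Union> ((\<lambda>q. R``{q}) ` ?D)" using sub assms(2)
      by (auto simp: equiv_def refl_on_def)
  qed
  have disj: "pairwise disjnt ((\<lambda>q. R``{q}) ` ?D)"
    unfolding pairwise_def disjnt_def
  proof (clarify)
    fix x y assume "x \<in> ?D" "y \<in> ?D" "R``{x} \<noteq> R``{y}"
    show "R``{x} \<inter> R``{y} = {}"
    proof (rule ccontr)
      assume "R``{x} \<inter> R``{y} \<noteq> {}"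
      then obtain z where "(x,z) \<in> R" "(y,z) \<in> R" by auto
      then have "(x,y) \<in> R" using assms(2) unfolding equiv_def sym_def trans_def by blast
      then have "R``{x} = R``{y}" using equiv_class_eq[OF assms(2)] by blast
      then show False using \<open>R``{x} \<noteq> R``{y}\<close> by simp
    qed
  qed
  have "PA (quot_nu nu) (quot_delta Q R delta) t = sum (sum nu) ((\<lambda>q. R``{q}) ` ?D)"
    unfolding PA_def quot_nu_def quot_Delta[OF assms wf] ..
  also have "\<dots> = sum nu (\<Union> ((\<lambda>q. R``{q}) ` ?D))"
  proof -
    have "sum nu (\<Union> ((\<lambda>q. R``{q}) ` ?D)) = (sum \<circ> sum) nu ((\<lambda>q. R``{q}) ` ?D)"
      by (rule sum.Union_disjoint) (use fin disj in \<open>auto simp: pairwise_def disjnt_def\<close>)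
    then show ?thesis by simp
  qed
  also have "\<dots> = PA nu delta t" unfolding un PA_def ..
  finally show "PA nu delta t = PA (quot_nu nu) (quot_delta Q R delta) t" ..
qed

end
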